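(* Let $\Gamma$ be a green Veldkamp quadrangle with point set $P$ and let $a,b\in P$. Then (i) $a\simeq b$ if and only if $a^{\rm op}=b^{\rm op}$; (ii) if $a\simeq b$, then $\Gamma_2(a)=\Gamma_2(b)$. In particular $\simeq$ is an equivalence relation on $P$.
   Context: A graph is a pair $(V,E)$ with $E$ a set of $2$-element subsets of $V$; $\Gamma_v$ is the set of neighbors of $v$; $\Gamma_m(v)=\{u\mid{\rm dist}(u,v)=m\}$. An $s$-path is a sequence $(x_0,\dots,x_s)$ of vertices with consecutive vertices adjacent and $x_{i-2}\ne x_i$ for $i\in[2,s]$. A closed $s$-path is an $s$-path with $s\ge3$ whose first and last vertices coincide; an $s$-circuit is the subgraph determined by a closed $s$-path. An opposition relation on a set $X$ is a symmetric anti-reflexive relation; trivial if any two distinct elements are related; $k$-plump if for every $S\subseteq X$ with $|S|\le k$ some element of $X$ is related to all elements of $S$. A Veldkamp graph is a graph with a $2$-plump opposition relation $\equiv_v$ on $\Gamma_v$ for each vertex $v$. A path $(v_0,\dots,v_s)$ is straight if $v_{i-1}\equiv_{v_i}v_{i+1}$ for all $i\in[1,s-1]$; a circuit is straight if every path in it is straight. A Veldkamp $n$-gon ($n\ge2$) is a Veldkamp graph satisfying (VP1) connected and bipartite; (VP2) for each $k\in[1,n-1]$ each straight $k$-path is the unique straight path between its endpoints of length at most $k$; (VP3) every straight $(n+1)$-path lies in a straight $2n$-circuit. A root is a straight $n$-path; two vertices are opposite if there is a root between them; $x^{\rm op}$ is the set of vertices opposite $x$. A Veldkamp quadrangle is a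 Veldkamp $4$-gon, with bipartition classes called points $P$ and lines $L$; it is green if $\equiv_x$ is trivial for every line $x$. A weed is a non-straight $4$-path $(a,x,b,y,c)$ with $a,b,c\in P$ and ${\rm dist}(a,c)=4$. For $a,b\in P$, write $a\simeq b$ if $a=b$ or there is a weed beginning at $a$ and ending at $b$. *)

theory Defs
  imports Main
begin

definition graph :: "'v set \<Rightarrow> 'v set set \<Rightarrow> bool" where
  "graph V E \<longleftrightarrow> (\<forall>e\<in>E. e \<subseteq> V \<and> card e = 2)"

definition adj :: "'v set set \<Rightarrow> 'v \<Rightarrow> 'v \<Rightarrow> bool" where
  "adj E u v \<longleftrightarrow> {u, v} \<in> E"

definition nbrs :: "'v set set \<Rightarrow> 'v \<Rightarrow> 'v set" where
  "nbrs E v = {u. adj E u v}"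

definition opposition_rel :: "'v set \<Rightarrow> ('v \<Rightarrow> 'v \<Rightarrow> bool) \<Rightarrow> bool" where
  "opposition_rel X R \<longleftrightarrow>
     (\<forall>x y. R x y \<longrightarrow> x \<in> X \<and> y \<in> X) \<and> (\<forall>x y. R x y \<longrightarrow> R y x) \<and> (\<forall>x. \<not> R x x)"

definition trivial_opp :: "'v set \<Rightarrow> ('v \<Rightarrow> 'v \<Rightarrow> bool) \<Rightarrow> bool" where
  "trivial_opp X R \<longleftrightarrow> (\<forall>x\<in>X. \<forall>y\<in>X. x \<noteq> y \<longrightarrow> R x y)"

definition plump :: "nat \<Rightarrow> 'v set \<Rightarrow> ('v \<Rightarrow> 'v \<Rightarrow> bool) \<Rightarrow> bool" where
  "plump k X R \<longleftrightarrow> (\<forall>S. S \<subseteq> X \<and> finite S \<and> card S \<le> k \<longrightarrow> (\<exists>x\<in>X. \<forall>s\<in>S. R x s))"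

text \<open>Veldkamp graph; \<open>opp v x y\<close> means x \<equiv>_v y.\<close>
definition veldkamp_graph :: "'v set \<Rightarrow> 'v set set \<Rightarrow> ('v \<Rightarrow> 'v \<Rightarrow> 'v \<Rightarrow> bool) \<Rightarrow> bool" where
  "veldkamp_graph V E opp \<longleftrightarrow> graph V E \<and>
     (\<forall>v\<in>V. opposition_rel (nbrs E v) (opp v) \<and> plump 2 (nbrs E v) (opp v))"

definition is_path :: "'v set \<Rightarrow> 'v set set \<Rightarrow> nat \<Rightarrow> 'v list \<Rightarrow> bool" where
  "is_path V E s xs \<longleftrightarrow> length xs = Suc s \<and> set xs \<subseteq> V \<and>
     (\<forall>i<s. adj E (xs ! i) (xs ! Suc i)) \<and>
     (\<forall>i. 2 \<le> i \<and> i \<le> s \<longrightarrow> xs ! (i - 2) \<noteq> xs ! i)"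

definition straight :: "('v \<Rightarrow> 'v \<Rightarrow> 'v \<Rightarrow> bool) \<Rightarrow> 'v list \<Rightarrow> bool" where
  "straight opp xs \<longleftrightarrow>
     (\<forall>i. 1 \<le> i \<and> i + 1 < length xs \<longrightarrow> opp (xs ! i) (xs ! (i - 1)) (xs ! (i + 1)))"

definition closed_path :: "'v set \<Rightarrow> 'v set set \<Rightarrow> nat \<Rightarrow> 'v list \<Rightarrow> bool" where
  "closed_path V E s xs \<longleftrightarrow> is_path V E s xs \<and> 3 \<le> s \<and> hd xs = last xs"

definition seq_edges :: "'v list \<Rightarrow> 'v set set" where
  "seq_edges xs = {{xs ! i, xs ! Suc i} | i. Suc i < length xs}"

definition path_in :: "'v set \<Rightarrow> 'v set set \<Rightarrow> 'v list \<Rightarrow> nat \<Rightarrow> 'v list \<Rightarrow> bool" where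
  "path_in V E c t ys \<longleftrightarrow> is_path V E t ys \<and> set ys \<subseteq> set c \<and>
     (\<forall>i<t. {ys ! i, ys ! Suc i} \<in> seq_edges c)"

definition straight_circuit ::
  "'v set \<Rightarrow> 'v set set \<Rightarrow> ('v \<Rightarrow> 'v \<Rightarrow> 'v \<Rightarrow> bool) \<Rightarrow> nat \<Rightarrow> 'v list \<Rightarrow> bool" where
  "straight_circuit V E opp s c \<longleftrightarrow> closed_path V E s c \<and>
     (\<forall>t ys. path_in V E c t ys \<longrightarrow> straight opp ys)"

definition walk :: "'v set set \<Rightarrow> 'v list \<Rightarrow> bool" where
  "walk E xs \<longleftrightarrow> xs \<noteq> [] \<and> (\<forall>i. Suc i < length xs \<longrightarrow> adj E (xs ! i) (xs ! Suc i))"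

definition connected_graph :: "'v set \<Rightarrow> 'v set set \<Rightarrow> bool" where
  "connected_graph V E \<longleftrightarrow>
     (\<forall>u\<in>V. \<forall>v\<in>V. \<exists>xs. walk E xs \<and> set xs \<subseteq> V \<and> hd xs = u \<and> last xs = v)"

definition bipartite :: "'v set \<Rightarrow> 'v set set \<Rightarrow> bool" where
  "bipartite V E \<longleftrightarrow> (\<exists>A. A \<subseteq> V \<and> (\<forall>u v. adj E u v \<longrightarrow> (u \<in> A \<longleftrightarrow> v \<notin> A)))"

text \<open>Graph distance (used only in connected graphs).\<close>
definition gdist :: "'v set set \<Rightarrow> 'v \<Rightarrow> 'v \<Rightarrow> nat" where
  "gdist E u v = (LEAST k. \<exists>xs. walk E xs \<and> length xs = Suc k \<and> hd xs = u \<and> last xs = v)"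

definition Gamma_m :: "'v set \<Rightarrow> 'v set set \<Rightarrow> nat \<Rightarrow> 'v \<Rightarrow> 'v set" where
  "Gamma_m V E m v = {u\<in>V. gdist E u v = m}"

definition veldkamp_ngon ::
  "'v set \<Rightarrow> 'v set set \<Rightarrow> ('v \<Rightarrow> 'v \<Rightarrow> 'v \<Rightarrow> bool) \<Rightarrow> nat \<Rightarrow> bool" where
  "veldkamp_ngon V E opp n \<longleftrightarrow> 2 \<le> n \<and> veldkamp_graph V E opp \<and>
     connected_graph V E \<and> bipartite V E \<and>
     (\<forall>k p. 1 \<le> k \<and> k \<le> n - 1 \<and> is_path V E k p \<and> straight opp p \<longrightarrow>
        (\<forall>j q. j \<le> k \<and> is_path V E j q \<and> straight opp q \<and>
               hd q = hd p \<and> last q = last p \<longrightarrow> q = p)) \<and>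
     (\<forall>p. is_path V E (n + 1) p \<and> straight opp p \<longrightarrow>
        (\<exists>c. straight_circuit V E opp (2 * n) c \<and> path_in V E c (n + 1) p))"

text \<open>Green Veldkamp quadrangle with point set P (the other bipartition class is the line set).\<close>
definition green_quadrangle ::
  "'v set \<Rightarrow> 'v set set \<Rightarrow> ('v \<Rightarrow> 'v \<Rightarrow> 'v \<Rightarrow> bool) \<Rightarrow> 'v set \<Rightarrow> bool" where
  "green_quadrangle V E opp P \<longleftrightarrow> veldkamp_ngon V E opp 4 \<and> P \<subseteq> V \<and>
     (\<forall>u v. adj E u v \<longrightarrow> (u \<in> P \<longleftrightarrow> v \<notin> P)) \<and>
     (\<forall>x\<in>V - P. trivial_opp (nbrs E x) (opp x))"

text \<open>x^op for a Veldkamp n-gon: endpoints of roots (straight n-paths) starting at x.\<close>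
definition op_set ::
  "'v set \<Rightarrow> 'v set set \<Rightarrow> ('v \<Rightarrow> 'v \<Rightarrow> 'v \<Rightarrow> bool) \<Rightarrow> nat \<Rightarrow> 'v \<Rightarrow> 'v set" where
  "op_set V E opp n x = {y. \<exists>p. is_path V E n p \<and> straight opp p \<and> hd p = x \<and> last p = y}"

definition weed ::
  "'v set \<Rightarrow> 'v set set \<Rightarrow> ('v \<Rightarrow> 'v \<Rightarrow> 'v \<Rightarrow> bool) \<Rightarrow> 'v set \<Rightarrow> 'v list \<Rightarrow> bool" where
  "weed V E opp P w \<longleftrightarrow> is_path V E 4 w \<and> \<not> straight opp w \<and>
     w ! 0 \<in> P \<and> w ! 2 \<in> P \<and> w ! 4 \<in> P \<and> gdist E (w ! 0) (w ! 4) = 4"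

definition simeq ::
  "'v set \<Rightarrow> 'v set set \<Rightarrow> ('v \<Rightarrow> 'v \<Rightarrow> 'v \<Rightarrow> bool) \<Rightarrow> 'v set \<Rightarrow> 'v \<Rightarrow> 'v \<Rightarrow> bool" where
  "simeq V E opp P a b \<longleftrightarrow> a = b \<or> (\<exists>w. weed V E opp P w \<and> hd w = a \<and> last w = b)"

end

theory Submission
  imports Defs
begin

lemma all5: "(\<forall>i<(5::nat). P i) \<longleftrightarrow> P 0 \<and> P 1 \<and> P 2 \<and> P 3 \<and> P 4"
  by (auto simp: less_Suc_eq numeral_eq_Suc)
lemma all4: "(\<forall>i<(4::nat). P i) \<longleftrightarrow> P 0 \<and> P 1 \<and> P 2 \<and> P 3"
  by (auto simp: less_Suc_eq numeral_eq_Suc)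
lemma all3: "(\<forall>i<(3::nat). P i) \<longleftrightarrow> P 0 \<and> P 1 \<and> P 2"
  by (auto simp: less_Suc_eq numeral_eq_Suc)
lemma all2: "(\<forall>i<(2::nat). P i) \<longleftrightarrow> P 0 \<and> P 1"
  by (auto simp: less_Suc_eq numeral_eq_Suc)
lemma rng5: "(\<forall>i::nat. 2 \<le> i \<and> i \<le> 5 \<longrightarrow> P i) \<longleftrightarrow> P 2 \<and> P 3 \<and> P 4 \<and> P 5"
proof -
  have "2 \<le> i \<and> i \<le> 5 \<longleftrightarrow> i = 2 \<or> i = 3 \<or> i = 4 \<or> i = (5::nat)" for i by arith
  then show ?thesis by auto
qed
lemma rng4: "(\<forall>i::nat. 2 \<le> i \<and> i \<le> 4 \<longrightarrow> P i) \<longleftrightarrow> P 2 \<and> P 3 \<and> P 4"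
proof -
  have "2 \<le> i \<and> i \<le> 4 \<longleftrightarrow> i = 2 \<or> i = 3 \<or> i = (4::nat)" for i by arith
  then show ?thesis by auto
qed
lemma rng3: "(\<forall>i::nat. 2 \<le> i \<and> i \<le> 3 \<longrightarrow> P i) \<longleftrightarrow> P 2 \<and> P 3"
proof -
  have "2 \<le> i \<and> i \<le> 3 \<longleftrightarrow> i = 2 \<or> i = (3::nat)" for i by arith
  then show ?thesis by auto
qed
lemma rng2: "(\<forall>i::nat. 2 \<le> i \<and> i \<le> 2 \<longrightarrow> P i) \<longleftrightarrow> P 2"
proof -
  have "2 \<le> i \<and> i \<le> 2 \<longleftrightarrow> i = (2::nat)" for i by arith
  then show ?thesis by auto
qed
lemma rngS5: "(\<forall>i::nat. 1 \<le> i \<and> i + 1 < 6 \<longrightarrow> P i) \<longleftrightarrow> P 1 \<and> P 2 \<and> P 3 \<and> P 4"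
proof -
  have "1 \<le> i \<and> i + 1 < 6 \<longleftrightarrow> i = 1 \<or> i = 2 \<or> i = 3 \<or> i = (4::nat)" for i by arith
  then show ?thesis by auto
qed
lemma rngS4: "(\<forall>i::nat. 1 \<le> i \<and> i + 1 < 5 \<longrightarrow> P i) \<longleftrightarrow> P 1 \<and> P 2 \<and> P 3"
proof -
  have "1 \<le> i \<and> i + 1 < 5 \<longleftrightarrow> i = 1 \<or> i = 2 \<or> i = (3::nat)" for i by arith
  then show ?thesis by auto
qed
lemma rngS3: "(\<forall>i::nat. 1 \<le> i \<and> i + 1 < 4 \<longrightarrow> P i) \<longleftrightarrow> P 1 \<and> P 2"
proof -
  have "1 \<le> i \<and> i + 1 < 4 \<longleftrightarrow> i = 1 \<or> i = (2::nat)" for i by arith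
  then show ?thesis by auto
qed
lemma rngS2: "(\<forall>i::nat. 1 \<le> i \<and> i + 1 < 3 \<longrightarrow> P i) \<longleftrightarrow> P 1"
proof -
  have "1 \<le> i \<and> i + 1 < 3 \<longleftrightarrow> i = (1::nat)" for i by arith
  then show ?thesis by auto
qed

lemma is_path4_iff: "is_path V E 4 [a,b,c,d,e] \<longleftrightarrow> {a,b,c,d,e} \<subseteq> V \<and> adj E a b \<and> adj E b c \<and> adj E c d \<and> adj E d e \<and> a \<noteq> c \<and> b \<noteq> d \<and> c \<noteq> e"
  unfolding is_path_def all4 rng4 by simp
lemma is_path5_iff: "is_path V E 5 [a,b,c,d,e,f] \<longleftrightarrow> {a,b,c,d,e,f} \<subseteq> V \<and> adj E a b \<and> adj E b c \<and> adj E c d \<and> adj E d e \<and> adj E e f \<and> a \<noteq> c \<and> b \<noteq> d \<and> c \<noteq> e \<and> d \<noteq> f"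
  unfolding is_path_def all5 rng5 by simp
lemma is_path3_iff: "is_path V E 3 [a,b,c,d] \<longleftrightarrow> {a,b,c,d} \<subseteq> V \<and> adj E a b \<and> adj E b c \<and> adj E c d \<and> a \<noteq> c \<and> b \<noteq> d"
  unfolding is_path_def all3 rng3 by simp
lemma is_path2_iff: "is_path V E 2 [a,b,c] \<longleftrightarrow> {a,b,c} \<subseteq> V \<and> adj E a b \<and> adj E b c \<and> a \<noteq> c"
  unfolding is_path_def all2 rng2 by simp
lemma straight5_iff: "straight opp [a,b,c,d,e,f] \<longleftrightarrow> opp b a c \<and> opp c b d \<and> opp d c e \<and> opp e d f"
proof -
  have L: "length [a,b,c,d,e,f] = 6" by simp
  show ?thesis unfolding straight_def L rngS5 by simp
qed
lemma straight4_iff: "straight opp [a,b,c,d,e] \<longleftrightarrow> opp b a c \<and> opp c b d \<and> opp d c e"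
proof -
  have L: "length [a,b,c,d,e] = 5" by simp
  show ?thesis unfolding straight_def L rngS4 by simp
qed
lemma straight3_iff: "straight opp [a,b,c,d] \<longleftrightarrow> opp b a c \<and> opp c b d"
proof -
  have L: "length [a,b,c,d] = 4" by simp
  show ?thesis unfolding straight_def L rngS3 by simp
qed
lemma straight2_iff: "straight opp [a,b,c] \<longleftrightarrow> opp b a c"
proof -
  have L: "length [a,b,c] = 3" by simp
  show ?thesis unfolding straight_def L rngS2 by simp
qed


definition coll :: "'v set set \<Rightarrow> 'v \<Rightarrow> 'v \<Rightarrow> bool" where
  "coll E p q \<longleftrightarrow> (\<exists>l. adj E p l \<and> adj E l q)"
definition rootP :: "'v set set \<Rightarrow> ('v \<Rightarrow> 'v \<Rightarrow> 'v \<Rightarrow> bool) \<Rightarrow> 'v \<Rightarrow> 'v \<Rightarrow> 'v \<Rightarrow> 'v \<Rightarrow> 'v \<Rightarrow> bool" where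
  "rootP E opp a x b y d \<longleftrightarrow> adj E a x \<and> adj E x b \<and> adj E b y \<and> adj E y d \<and> a \<noteq> b \<and> b \<noteq> d \<and> opp b x y"
definition opP :: "'v set set \<Rightarrow> ('v \<Rightarrow> 'v \<Rightarrow> 'v \<Rightarrow> bool) \<Rightarrow> 'v \<Rightarrow> 'v \<Rightarrow> bool" where
  "opP E opp a d \<longleftrightarrow> (\<exists>x b y. rootP E opp a x b y d)"

locale GQ =
  fixes V :: "'v set" and E :: "'v set set" and opp :: "'v \<Rightarrow> 'v \<Rightarrow> 'v \<Rightarrow> bool" and P :: "'v set"
  assumes gq: "green_quadrangle V E opp P"
begin

lemma ngon: "veldkamp_ngon V E opp 4" using gq unfolding green_quadrangle_def by blast
lemma PV: "P \<subseteq> V" using gq unfolding green_quadrangle_def by blast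
lemma bip: "adj E u v \<Longrightarrow> (u \<in> P \<longleftrightarrow> v \<notin> P)" using gq unfolding green_quadrangle_def by blast
lemma vg: "veldkamp_graph V E opp" using ngon unfolding veldkamp_ngon_def by blast
lemma graph: "graph V E" using vg unfolding veldkamp_graph_def by blast

lemma adj_sym: "adj E u v \<Longrightarrow> adj E v u" unfolding adj_def by (simp add: insert_commute)
lemma adj_V: "adj E u v \<Longrightarrow> u \<in> V \<and> v \<in> V" using graph unfolding adj_def graph_def by blast
lemma adj_ne: "adj E u v \<Longrightarrow> u \<noteq> v" using graph unfolding adj_def graph_def by fastforce

lemma green: "v \<in> V \<Longrightarrow> v \<notin> P \<Longrightarrow> adj E x v \<Longrightarrow> adj E y v \<Longrightarrow> x \<noteq> y \<Longrightarrow> opp v x y"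
  using gq unfolding green_quadrangle_def trivial_opp_def nbrs_def by blast

lemma oppr: "v \<in> V \<Longrightarrow> opposition_rel (nbrs E v) (opp v)"
  using vg unfolding veldkamp_graph_def by blast
lemma plumpv: "v \<in> V \<Longrightarrow> plump 2 (nbrs E v) (opp v)"
  using vg unfolding veldkamp_graph_def by blast

lemma opp_adj: "v \<in> V \<Longrightarrow> opp v x y \<Longrightarrow> adj E x v \<and> adj E y v"
  using oppr unfolding opposition_rel_def nbrs_def by blast
lemma opp_sym: "v \<in> V \<Longrightarrow> opp v x y \<Longrightarrow> opp v y x"
  using oppr unfolding opposition_rel_def by blast
lemma opp_irr: "v \<in> V \<Longrightarrow> opp v x y \<Longrightarrow> x \<noteq> y"
  using oppr unfolding opposition_rel_def by blast

lemma plump2: "v \<in> V \<Longrightarrow> adj E x v \<Longrightarrow> adj E y v \<Longrightarrow> \<exists>z. adj E z v \<and> opp v z x \<and> opp v z y"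
proof -
  assume v: "v \<in> V" and x: "adj E x v" and y: "adj E y v"
  have "card {x,y} \<le> 2" by (simp add: card_insert_if)
  moreover have "{x,y} \<subseteq> nbrs E v" using x y unfolding nbrs_def by auto
  ultimately obtain z where "z \<in> nbrs E v" "\<forall>s\<in>{x,y}. opp v z s"
    using plumpv[OF v] unfolding plump_def by (meson finite.emptyI finite.insertI)
  then show ?thesis unfolding nbrs_def by auto
qed
lemma plump1: "v \<in> V \<Longrightarrow> adj E x v \<Longrightarrow> \<exists>z. adj E z v \<and> opp v z x"
  using plump2 by blast
lemma plump0: "v \<in> V \<Longrightarrow> \<exists>z. adj E z v"
proof -
  assume v: "v \<in> V"
  obtain z where "z \<in> nbrs E v" using plumpv[OF v] unfolding plump_def by fastforce
  then show ?thesis unfolding nbrs_def by auto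
qed

lemma VP2: "1 \<le> k \<Longrightarrow> k \<le> 3 \<Longrightarrow> is_path V E k p \<Longrightarrow> straight opp p \<Longrightarrow> j \<le> k \<Longrightarrow> is_path V E j q
   \<Longrightarrow> straight opp q \<Longrightarrow> hd q = hd p \<Longrightarrow> last q = last p \<Longrightarrow> q = p"
  using ngon unfolding veldkamp_ngon_def by auto

lemma VP3: "is_path V E 5 p \<Longrightarrow> straight opp p \<Longrightarrow> \<exists>c. straight_circuit V E opp 8 c \<and> path_in V E c 5 p"
  using ngon unfolding veldkamp_ngon_def by auto

lemma VP2_3: "is_path V E 3 [a,b,c,d] \<Longrightarrow> straight opp [a,b,c,d] \<Longrightarrow> is_path V E 3 [a,b',c',d]
   \<Longrightarrow> straight opp [a,b',c',d] \<Longrightarrow> b' = b \<and> c' = c"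
  using VP2[of 3 "[a,b,c,d]" 3 "[a,b',c',d]"] by auto

lemma VP2_2: "is_path V E 2 [a,b,c] \<Longrightarrow> straight opp [a,b,c] \<Longrightarrow> is_path V E 2 [a,b',c]
   \<Longrightarrow> straight opp [a,b',c] \<Longrightarrow> b' = b"
  using VP2[of 2 "[a,b,c]" 2 "[a,b',c]"] by auto

lemma T1: "adj E p l \<Longrightarrow> adj E l q \<Longrightarrow> adj E p m \<Longrightarrow> adj E m q \<Longrightarrow> p \<noteq> q \<Longrightarrow> p \<in> P \<Longrightarrow> l = m"
proof -
  assume h: "adj E p l" "adj E l q" "adj E p m" "adj E m q" "p \<noteq> q" "p \<in> P"
  have lP: "l \<notin> P" "m \<notin> P" using h bip by auto
  have V: "p \<in> V" "q \<in> V" "l \<in> V" "m \<in> V" using h adj_V by auto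
  have o1: "opp l p q" by (rule green) (use h lP V adj_sym in auto)
  have o2: "opp m p q" by (rule green) (use h lP V adj_sym in auto)
  have "m = l"
    by (rule VP2_2[of p l q m]) (use h V o1 o2 in \<open>auto simp: is_path2_iff straight2_iff\<close>)
  then show "l = m" by simp
qed

lemma cyc4: "adj E u v \<Longrightarrow> adj E v w \<Longrightarrow> adj E w z \<Longrightarrow> adj E z u \<Longrightarrow> u \<noteq> w \<Longrightarrow> v \<noteq> z \<Longrightarrow> False"
proof -
  assume h: "adj E u v" "adj E v w" "adj E w z" "adj E z u" "u \<noteq> w" "v \<noteq> z"
  show False
  proof (cases "u \<in> P")
    case True
    then show ?thesis using T1[of u v w z] h adj_sym by blast
  next
    case False
    then have "v \<in> P" using h bip by blast
    then show ?thesis using T1[of v w z u] h adj_sym by blast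
  qed
qed

end


lemma all8: "(\<forall>i<(8::nat). P i) \<longleftrightarrow> P 0 \<and> P 1 \<and> P 2 \<and> P 3 \<and> P 4 \<and> P 5 \<and> P 6 \<and> P 7"
  by (simp add: numeral_eq_Suc All_less_Suc conj_ac)
lemma rng8: "(\<forall>i::nat. 2 \<le> i \<and> i \<le> 8 \<longrightarrow> P i) \<longleftrightarrow> P 2 \<and> P 3 \<and> P 4 \<and> P 5 \<and> P 6 \<and> P 7 \<and> P 8"
proof -
  have "2 \<le> i \<and> i \<le> 8 \<longleftrightarrow> i = 2 \<or> i = 3 \<or> i = 4 \<or> i = 5 \<or> i = 6 \<or> i = 7 \<or> i = (8::nat)" for i by arith
  then show ?thesis by auto
qed
lemma is_path8_iff: "is_path V E 8 [c0,c1,c2,c3,c4,c5,c6,c7,c8] \<longleftrightarrow> {c0,c1,c2,c3,c4,c5,c6,c7,c8} \<subseteq> V \<and>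
   adj E c0 c1 \<and> adj E c1 c2 \<and> adj E c2 c3 \<and> adj E c3 c4 \<and> adj E c4 c5 \<and> adj E c5 c6 \<and> adj E c6 c7 \<and> adj E c7 c8 \<and>
   c0 \<noteq> c2 \<and> c1 \<noteq> c3 \<and> c2 \<noteq> c4 \<and> c3 \<noteq> c5 \<and> c4 \<noteq> c6 \<and> c5 \<noteq> c7 \<and> c6 \<noteq> c8"
  unfolding is_path_def all8 rng8 by simp

lemma mod8_cases: "(r::nat) < 8 \<Longrightarrow> r = 0 \<or> r = 1 \<or> r = 2 \<or> r = 3 \<or> r = 4 \<or> r = 5 \<or> r = 6 \<or> r = 7"
  by arith

lemma seq_edges_in: "Suc i < length xs \<Longrightarrow> {xs ! i, xs ! Suc i} \<in> seq_edges xs"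
  unfolding seq_edges_def by blast

lemma ma: "(i::nat) mod 8 = j mod 8 \<Longrightarrow> (k + i) mod 8 = (k + j) mod 8" by (metis mod_add_right_eq)
lemma mb: "(k + i) mod 8 = (k + j) mod 8 \<Longrightarrow> (i::nat) mod 8 = j mod 8"
proof -
  assume h: "(k + i) mod 8 = (k + j) mod 8"
  have "(7 * k + (k + i)) mod 8 = (7 * k + (k + j)) mod 8" using ma[OF h] .
  moreover have "7 * k + (k + i) = i + k * 8" "7 * k + (k + j) = j + k * 8" by simp_all
  ultimately show ?thesis by simp
qed
lemma mc: "(k + (i + 7 * k)) mod 8 = (i::nat) mod 8"
proof -
  have "k + (i + 7 * k) = i + k * 8" by simp
  then show ?thesis by simp
qed
lemma md: "(k + 7 * (k + 7 * Suc i)) mod 8 = Suc i mod (8::nat)"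
proof -
  have e: "k + 7 * (k + 7 * Suc i) = Suc i + (k + 6 * Suc i) * 8" by simp
  show ?thesis by (simp only: e mod_mult_self1)
qed
lemma me: "(i::nat) mod 8 = j mod 8 \<Longrightarrow> (k + 7 * i) mod 8 = (k + 7 * j) mod 8"
  by (metis ma mod_mult_right_eq)
lemma mf: "(k + 7 * i) mod 8 = (k + 7 * j) mod 8 \<Longrightarrow> (i::nat) mod 8 = j mod 8"
proof -
  assume "(k + 7 * i) mod 8 = (k + 7 * j) mod 8"
  then have "(7 * i) mod 8 = (7 * j) mod 8" by (rule mb)
  then have "(7 * (7 * i)) mod 8 = (7 * (7 * j)) mod 8" by (metis mod_mult_right_eq)
  moreover have e: "7 * (7 * i) = i + (6 * i) * 8" "7 * (7 * j) = j + (6 * j) * 8" by simp_all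
  ultimately show ?thesis by (simp only: e mod_mult_self1)
qed
lemma mg: "(i::nat) mod 8 = j mod 8 \<Longrightarrow> Suc i mod 8 = Suc j mod 8" by (metis mod_Suc_eq)
lemma mh: "(i::nat) mod 8 = Suc j mod 8 \<Longrightarrow> (i + 7) mod 8 = j mod 8"
proof -
  assume "(i::nat) mod 8 = Suc j mod 8"
  then have "(7 + i) mod 8 = (7 + Suc j) mod 8" by (rule ma)
  moreover have "7 + Suc j = j + 1 * 8" by simp
  ultimately show ?thesis by (simp add: add.commute)
qed
lemma mi: "(x::nat) mod 8 \<noteq> Suc (Suc x) mod 8" by presburger


context GQ begin

lemma neighD:
  assumes perD: "\<forall>i j. i mod 8 = j mod 8 \<longrightarrow> D i = D j"
    and injD: "\<forall>i j. D i = D j \<longrightarrow> i mod 8 = j mod 8"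
    and edgeD: "\<forall>e\<in>S. \<exists>j. e = {D j, D (Suc j)}"
    and e: "{D i, v} \<in> S"
  shows "v = D (Suc i) \<or> v = D (i + 7)"
proof -
  obtain j where j: "{D i, v} = {D j, D (Suc j)}" using edgeD e by blast
  then have "(D i = D j \<and> v = D (Suc j)) \<or> (D i = D (Suc j) \<and> v = D j)"
    by (simp add: doubleton_eq_iff)
  then show ?thesis
  proof
    assume h: "D i = D j \<and> v = D (Suc j)"
    then have "i mod 8 = j mod 8" using injD by blast
    then have "Suc i mod 8 = Suc j mod 8" by (rule mg)
    then show ?thesis using h perD by metis
  next
    assume h: "D i = D (Suc j) \<and> v = D j"
    then have "i mod 8 = Suc j mod 8" using injD by blast
    then have "(i + 7) mod 8 = j mod 8" by (rule mh)
    then show ?thesis using h perD by metis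
  qed
qed

lemma walkD:
  assumes perD: "\<forall>i j. i mod 8 = j mod 8 \<longrightarrow> D i = D j"
    and injD: "\<forall>i j. D i = D j \<longrightarrow> i mod 8 = j mod 8"
    and edgeD: "\<forall>e\<in>S. \<exists>j. e = {D j, D (Suc j)}"
    and pin: "\<forall>i<5. {p!i, p!Suc i} \<in> S"
    and nb: "\<forall>i. 2 \<le> i \<and> i \<le> 5 \<longrightarrow> p!(i-2) \<noteq> p!i"
    and p0: "p!0 = D 0" and p1: "p!1 = D 1"
  shows "\<forall>i\<le>5. p!i = D i"
proof -
  have step: "i \<le> 4 \<longrightarrow> p!i = D i \<and> p!(Suc i) = D (Suc i)" for i
  proof (induction i)
    case 0 then show ?case using p0 p1 by simp
  next
    case (Suc i)
    show ?case
    proof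
      assume le: "Suc i \<le> 4"
      then have IH: "p!i = D i" "p!(Suc i) = D (Suc i)" using Suc by simp_all
      have "Suc i < 5" using le by simp
      then have "{p!(Suc i), p!(Suc (Suc i))} \<in> S" using pin by blast
      then have "{D (Suc i), p!(Suc (Suc i))} \<in> S" using IH by simp
      then have "p!(Suc (Suc i)) = D (Suc (Suc i)) \<or> p!(Suc (Suc i)) = D (Suc i + 7)"
        using neighD[OF perD injD edgeD] by blast
      moreover have "D (Suc i + 7) = D i"
      proof -
        have e: "Suc i + 7 = i + 1 * 8" by simp
        have "(Suc i + 7) mod 8 = i mod 8" by (simp only: e mod_mult_self1)
        then show ?thesis using perD by blast
      qed
      moreover have "p!i \<noteq> p!(Suc (Suc i))"
      proof -
        have "2 \<le> Suc (Suc i) \<and> Suc (Suc i) \<le> 5" using le by simp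
        then have "p!(Suc (Suc i) - 2) \<noteq> p!(Suc (Suc i))" using nb by blast
        then show ?thesis by simp
      qed
      ultimately show "p!(Suc i) = D (Suc i) \<and> p!(Suc (Suc i)) = D (Suc (Suc i))" using IH by auto
    qed
  qed
  show ?thesis
  proof (intro allI impI)
    fix i assume "i \<le> (5::nat)"
    then consider "i \<le> 4" | "i = 5" by arith
    then show "p!i = D i"
    proof cases
      case 1 then show ?thesis using step by blast
    next
      case 2 then show ?thesis using step[of 4] by (simp add: numeral_eq_Suc)
    qed
  qed
qed


lemma closeD:
  assumes perD: "\<forall>i j. i mod 8 = j mod 8 \<longrightarrow> D i = D j"
    and adjD: "\<forall>i. adj E (D i) (D (Suc i))"
    and strD: "\<forall>i. opp (D (Suc i)) (D i) (D (Suc (Suc i)))"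
    and pD: "\<forall>i\<le>5. p!i = D i"
  shows "\<exists>q6 q7. adj E (p!5) q6 \<and> adj E q6 q7 \<and> adj E q7 (p!0) \<and> opp (p!5) (p!4) q6 \<and>
     opp q6 (p!5) q7 \<and> opp q7 q6 (p!0) \<and> opp (p!0) q7 (p!1)"
proof (intro exI conjI)
  have d8: "D 8 = D 0" and d9: "D 9 = D 1" using perD by auto
  have p: "p!0 = D 0" "p!1 = D 1" "p!4 = D 4" "p!5 = D 5" using pD by auto
  show "adj E (p!5) (D 6)" using adjD[rule_format, of 5] p by simp
  show "adj E (D 6) (D 7)" using adjD[rule_format, of 6] by simp
  show "adj E (D 7) (p!0)" using adjD[rule_format, of 7] p d8 by simp
  show "opp (p!5) (p!4) (D 6)" using strD[rule_format, of 4] p by (simp add: numeral_eq_Suc)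
  show "opp (D 6) (p!5) (D 7)" using strD[rule_format, of 5] p by (simp add: numeral_eq_Suc)
  show "opp (D 7) (D 6) (p!0)" using strD[rule_format, of 6] p d8 by (simp add: numeral_eq_Suc)
  show "opp (p!0) (D 7) (p!1)" using strD[rule_format, of 7] p d8 d9 by (simp add: numeral_eq_Suc)
qed

lemma cycC:
  assumes perC: "\<forall>i j. i mod 8 = j mod 8 \<longrightarrow> C i = C j"
    and injC: "\<forall>i j. C i = C j \<longrightarrow> i mod 8 = j mod 8"
    and edgeC: "\<forall>e\<in>S. \<exists>j. e = {C j, C (Suc j)}"
    and adjC: "\<forall>i. adj E (C i) (C (Suc i))"
    and strC: "\<forall>i. opp (C (Suc i)) (C i) (C (Suc (Suc i)))"
    and pin: "\<forall>i<5. {p!i, p!Suc i} \<in> S"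
    and nb: "\<forall>i. 2 \<le> i \<and> i \<le> 5 \<longrightarrow> p!(i-2) \<noteq> p!i"
    and p0: "p!0 = C k"
  shows "\<exists>q6 q7. adj E (p!5) q6 \<and> adj E q6 q7 \<and> adj E q7 (p!0) \<and> opp (p!5) (p!4) q6 \<and>
     opp q6 (p!5) q7 \<and> opp q7 q6 (p!0) \<and> opp (p!0) q7 (p!1)"
proof -
  define D1 where "D1 i = C (k + i)" for i
  define D7 where "D7 i = C (k + 7 * i)" for i
  have per1: "\<forall>i j. i mod 8 = j mod 8 \<longrightarrow> D1 i = D1 j"
  proof (intro allI impI)
    fix i j :: nat assume "i mod 8 = j mod 8"
    then have "(k + i) mod 8 = (k + j) mod 8" by (rule ma)
    then show "D1 i = D1 j" using perC unfolding D1_def by blast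
  qed
  have inj1: "\<forall>i j. D1 i = D1 j \<longrightarrow> i mod 8 = j mod 8"
  proof (intro allI impI)
    fix i j :: nat assume "D1 i = D1 j"
    then have "(k + i) mod 8 = (k + j) mod 8" using injC unfolding D1_def by blast
    then show "i mod 8 = j mod 8" by (rule mb)
  qed
  have edge1: "\<forall>e\<in>S. \<exists>j. e = {D1 j, D1 (Suc j)}"
  proof
    fix e assume "e \<in> S"
    then obtain i where i: "e = {C i, C (Suc i)}" using edgeC by blast
    define j where "j = i + 7 * k"
    have j: "(k + j) mod 8 = i mod 8" unfolding j_def by (rule mc)
    then have "Suc (k + j) mod 8 = Suc i mod 8" by (rule mg)
    then have "(k + Suc j) mod 8 = Suc i mod 8" by simp
    then have "C (k + Suc j) = C (Suc i)" by (rule perC[rule_format])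
    moreover have "C (k + j) = C i" using j by (rule perC[rule_format])
    ultimately have "e = {D1 j, D1 (Suc j)}" unfolding D1_def i by simp
    then show "\<exists>j. e = {D1 j, D1 (Suc j)}" by blast
  qed
  have adj1: "\<forall>i. adj E (D1 i) (D1 (Suc i))" using adjC unfolding D1_def by simp
  have str1: "\<forall>i. opp (D1 (Suc i)) (D1 i) (D1 (Suc (Suc i)))" using strC unfolding D1_def by simp
  have per7: "\<forall>i j. i mod 8 = j mod 8 \<longrightarrow> D7 i = D7 j"
  proof (intro allI impI)
    fix i j :: nat assume "i mod 8 = j mod 8"
    then have "(k + 7 * i) mod 8 = (k + 7 * j) mod 8" by (rule me)
    then show "D7 i = D7 j" using perC unfolding D7_def by blast
  qed
  have inj7: "\<forall>i j. D7 i = D7 j \<longrightarrow> i mod 8 = j mod 8"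
  proof (intro allI impI)
    fix i j :: nat assume "D7 i = D7 j"
    then have "(k + 7 * i) mod 8 = (k + 7 * j) mod 8" using injC unfolding D7_def by blast
    then show "i mod 8 = j mod 8" by (rule mf)
  qed
  have edge7: "\<forall>e\<in>S. \<exists>j. e = {D7 j, D7 (Suc j)}"
  proof
    fix e assume "e \<in> S"
    then obtain i where i: "e = {C i, C (Suc i)}" using edgeC by blast
    define j where "j = k + 7 * Suc i"
    have j: "(k + 7 * j) mod 8 = Suc i mod 8" unfolding j_def by (rule md)
    then have "(k + 7 * j + 7) mod 8 = i mod 8" by (rule mh)
    then have "(k + 7 * Suc j) mod 8 = i mod 8" by (simp add: algebra_simps)
    then have "C (k + 7 * Suc j) = C i" by (rule perC[rule_format])
    moreover have "C (k + 7 * j) = C (Suc i)" using j by (rule perC[rule_format])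
    ultimately have "e = {D7 j, D7 (Suc j)}" unfolding D7_def i by (simp add: insert_commute)
    then show "\<exists>j. e = {D7 j, D7 (Suc j)}" by blast
  qed
  have adj7: "\<forall>i. adj E (D7 i) (D7 (Suc i))"
  proof
    fix i
    have "adj E (C (k + 7 * i + 7)) (C (Suc (k + 7 * i + 7)))" using adjC by blast
    moreover have "(Suc (k + 7 * i + 7)) mod 8 = (k + 7 * i) mod 8"
    proof -
      have e: "Suc (k + 7 * i + 7) = (k + 7 * i) + 1 * 8" by simp
      show ?thesis by (simp only: e mod_mult_self1)
    qed
    ultimately have "adj E (C (k + 7 * i + 7)) (C (k + 7 * i))" using perC by metis
    then have "adj E (C (k + 7 * i)) (C (k + 7 * i + 7))" using adj_sym by blast
    moreover have "k + 7 * Suc i = k + 7 * i + 7" by simp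
    ultimately show "adj E (D7 i) (D7 (Suc i))" unfolding D7_def by metis
  qed
  have str7: "\<forall>i. opp (D7 (Suc i)) (D7 i) (D7 (Suc (Suc i)))"
  proof
    fix i
    define m where "m = k + 7 * i + 14"
    have o: "opp (C (Suc m)) (C m) (C (Suc (Suc m)))" using strC by blast
    have x1: "Suc m = (k + 7 * Suc i) + 1 * 8" unfolding m_def by simp
    have e1: "C (Suc m) = D7 (Suc i)" unfolding D7_def
      by (rule perC[rule_format]) (simp only: x1 mod_mult_self1)
    have x2: "m = k + 7 * Suc (Suc i)" unfolding m_def by simp
    have e2: "C m = D7 (Suc (Suc i))" unfolding D7_def x2 by simp
    have x3: "Suc (Suc m) = (k + 7 * i) + 2 * 8" unfolding m_def by simp
    have e3: "C (Suc (Suc m)) = D7 i" unfolding D7_def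
      by (rule perC[rule_format]) (simp only: x3 mod_mult_self1)
    have "opp (D7 (Suc i)) (D7 (Suc (Suc i))) (D7 i)" using o e1 e2 e3 by simp
    moreover have "D7 (Suc i) \<in> V" using adj7 adj_V by blast
    ultimately show "opp (D7 (Suc i)) (D7 i) (D7 (Suc (Suc i)))" using opp_sym by blast
  qed
  have "{p!0, p!1} \<in> S" using pin by auto
  then have "{D1 0, p!1} \<in> S" using p0 unfolding D1_def by simp
  then have "p!1 = D1 (Suc 0) \<or> p!1 = D1 (0 + 7)" by (rule neighD[OF per1 inj1 edge1])
  then have "p!1 = D1 1 \<or> p!1 = D1 7" by simp
  then show ?thesis
  proof
    assume "p!1 = D1 1"
    moreover have "p!0 = D1 0" using p0 unfolding D1_def by simp
    ultimately have "\<forall>i\<le>5. p!i = D1 i" using walkD[OF per1 inj1 edge1 pin nb] by blast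
    then show ?thesis using closeD[OF per1 adj1 str1] by blast
  next
    assume "p!1 = D1 7"
    then have "p!1 = D7 1" unfolding D1_def D7_def by simp
    moreover have "p!0 = D7 0" using p0 unfolding D7_def by simp
    ultimately have "\<forall>i\<le>5. p!i = D7 i" using walkD[OF per7 inj7 edge7 pin nb] by blast
    then show ?thesis using closeD[OF per7 adj7 str7] by blast
  qed
qed


lemma CL_list:
  assumes pp: "is_path V E 5 p" and ps: "straight opp p"
  shows "\<exists>q6 q7. adj E (p!5) q6 \<and> adj E q6 q7 \<and> adj E q7 (p!0) \<and> opp (p!5) (p!4) q6 \<and>
     opp q6 (p!5) q7 \<and> opp q7 q6 (p!0) \<and> opp (p!0) q7 (p!1)"
proof -
  obtain c where sc: "straight_circuit V E opp 8 c" and pin: "path_in V E c 5 p" using VP3[OF pp ps] by blast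
  have cp: "is_path V E 8 c" and hl: "hd c = last c" using sc unfolding straight_circuit_def closed_path_def by auto
  have allstr: "\<And>t ys. path_in V E c t ys \<Longrightarrow> straight opp ys" using sc unfolding straight_circuit_def by auto
  have "length c = 9" using cp unfolding is_path_def by simp
  then obtain c0 c1 c2 c3 c4 c5 c6 c7 c8 where cdef: "c = [c0,c1,c2,c3,c4,c5,c6,c7,c8]"
    by (auto simp: numeral_eq_Suc length_Suc_conv)
  have cf: "{c0,c1,c2,c3,c4,c5,c6,c7,c8} \<subseteq> V \<and>
   adj E c0 c1 \<and> adj E c1 c2 \<and> adj E c2 c3 \<and> adj E c3 c4 \<and> adj E c4 c5 \<and> adj E c5 c6 \<and> adj E c6 c7 \<and> adj E c7 c8 \<and>
   c0 \<noteq> c2 \<and> c1 \<noteq> c3 \<and> c2 \<noteq> c4 \<and> c3 \<noteq> c5 \<and> c4 \<noteq> c6 \<and> c5 \<noteq> c7 \<and> c6 \<noteq> c8"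
    using cp unfolding cdef is_path8_iff .
  have c80: "c8 = c0" using hl unfolding cdef by simp
  have a01: "adj E c0 c1" and a12: "adj E c1 c2" and a23: "adj E c2 c3" and a34: "adj E c3 c4"
    and a45: "adj E c4 c5" and a56: "adj E c5 c6" and a67: "adj E c6 c7" and a70: "adj E c7 c0"
    using cf c80 by auto
  have par: "(c0 \<in> P \<longleftrightarrow> c1 \<notin> P) \<and> (c1 \<in> P \<longleftrightarrow> c2 \<notin> P) \<and> (c2 \<in> P \<longleftrightarrow> c3 \<notin> P) \<and> (c3 \<in> P \<longleftrightarrow> c4 \<notin> P) \<and>
     (c4 \<in> P \<longleftrightarrow> c5 \<notin> P) \<and> (c5 \<in> P \<longleftrightarrow> c6 \<notin> P) \<and> (c6 \<in> P \<longleftrightarrow> c7 \<notin> P) \<and> (c7 \<in> P \<longleftrightarrow> c0 \<notin> P)"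
    using bip a01 a12 a23 a34 a45 a56 a67 a70 by blast
  have odd: "c0 \<noteq> c1 \<and> c0 \<noteq> c3 \<and> c0 \<noteq> c5 \<and> c0 \<noteq> c7 \<and> c1 \<noteq> c2 \<and> c1 \<noteq> c4 \<and> c1 \<noteq> c6 \<and>
     c2 \<noteq> c3 \<and> c2 \<noteq> c5 \<and> c2 \<noteq> c7 \<and> c3 \<noteq> c4 \<and> c3 \<noteq> c6 \<and> c4 \<noteq> c5 \<and> c4 \<noteq> c7 \<and> c5 \<noteq> c6 \<and> c6 \<noteq> c7"
    using par by blast
  have d2: "c0 \<noteq> c2 \<and> c1 \<noteq> c3 \<and> c2 \<noteq> c4 \<and> c3 \<noteq> c5 \<and> c4 \<noteq> c6 \<and> c5 \<noteq> c7 \<and> c6 \<noteq> c0"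
    using cf c80 by auto
  have d4: "c0 \<noteq> c4 \<and> c1 \<noteq> c5 \<and> c2 \<noteq> c6 \<and> c3 \<noteq> c7"
  proof (intro conjI notI)
    assume "c0 = c4" then show False using cyc4[of c0 c1 c2 c3] a01 a12 a23 a34 d2 by auto
  next
    assume "c1 = c5" then show False using cyc4[of c1 c2 c3 c4] a12 a23 a34 a45 d2 by auto
  next
    assume "c2 = c6" then show False using cyc4[of c2 c3 c4 c5] a23 a34 a45 a56 d2 by auto
  next
    assume "c3 = c7" then show False using cyc4[of c3 c4 c5 c6] a34 a45 a56 a67 d2 by auto
  qed
  have cV: "c0 \<in> V" "c1 \<in> V" "c2 \<in> V" "c3 \<in> V" "c4 \<in> V" "c5 \<in> V" "c6 \<in> V" "c7 \<in> V" using cf by auto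
  have e0: "{c0,c1} \<in> seq_edges c" using seq_edges_in[of 0 c] unfolding cdef by simp
  have e1: "{c1,c2} \<in> seq_edges c" using seq_edges_in[of 1 c] unfolding cdef by simp
  have e2: "{c2,c3} \<in> seq_edges c" using seq_edges_in[of 2 c] unfolding cdef by simp
  have e3: "{c3,c4} \<in> seq_edges c" using seq_edges_in[of 3 c] unfolding cdef by simp
  have e4: "{c4,c5} \<in> seq_edges c" using seq_edges_in[of 4 c] unfolding cdef by simp
  have e5: "{c5,c6} \<in> seq_edges c" using seq_edges_in[of 5 c] unfolding cdef by simp
  have e6: "{c6,c7} \<in> seq_edges c" using seq_edges_in[of 6 c] unfolding cdef by simp
  have e7: "{c7,c0} \<in> seq_edges c" using seq_edges_in[of 7 c] c80 unfolding cdef by simp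
  have d17: "c1 \<noteq> c7"
  proof
    assume h: "c1 = c7"
    have pa: "path_in V E c 3 [c1,c2,c3,c4]"
      unfolding path_in_def using cV a12 a23 a34 d2 e1 e2 e3 unfolding cdef
      by (auto simp: is_path3_iff all3)
    have pb: "path_in V E c 3 [c1,c6,c5,c4]"
      unfolding path_in_def using cV a67 a56 a45 d2 d4 e6 e5 e4 h adj_sym unfolding cdef
      by (auto simp: is_path3_iff all3 insert_commute)
    have "c6 = c2 \<and> c5 = c3"
      using VP2_3[of c1 c2 c3 c4 c6 c5] pa pb allstr unfolding path_in_def by blast
    then show False using d4 by simp
  qed
  define L where "L = [c0,c1,c2,c3,c4,c5,c6,c7]"
  define C where "C i = L ! (i mod 8)" for i
  have perC: "\<forall>i j. i mod 8 = j mod 8 \<longrightarrow> C i = C j" unfolding C_def by simp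
  have Cr: "\<And>x. \<exists>r. r < 8 \<and> x mod 8 = r \<and> Suc x mod 8 = (if r = 7 then 0 else Suc r)"
    by (auto simp: mod_Suc)
  have alld: "c0 \<noteq> c1 \<and> c0 \<noteq> c2 \<and> c0 \<noteq> c3 \<and> c0 \<noteq> c4 \<and> c0 \<noteq> c5 \<and> c0 \<noteq> c6 \<and> c0 \<noteq> c7 \<and>
     c1 \<noteq> c2 \<and> c1 \<noteq> c3 \<and> c1 \<noteq> c4 \<and> c1 \<noteq> c5 \<and> c1 \<noteq> c6 \<and> c1 \<noteq> c7 \<and>
     c2 \<noteq> c3 \<and> c2 \<noteq> c4 \<and> c2 \<noteq> c5 \<and> c2 \<noteq> c6 \<and> c2 \<noteq> c7 \<and>
     c3 \<noteq> c4 \<and> c3 \<noteq> c5 \<and> c3 \<noteq> c6 \<and> c3 \<noteq> c7 \<and>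
     c4 \<noteq> c5 \<and> c4 \<noteq> c6 \<and> c4 \<noteq> c7 \<and> c5 \<noteq> c6 \<and> c5 \<noteq> c7 \<and> c6 \<noteq> c7"
    using odd d2 d4 d17 by auto
  have Ldist: "\<And>r s. r < 8 \<Longrightarrow> s < 8 \<Longrightarrow> L ! r = L ! s \<Longrightarrow> r = s"
  proof -
    fix r s :: nat assume r: "r < 8" and s: "s < 8" and eq: "L ! r = L ! s"
    from mod8_cases[OF r] mod8_cases[OF s] eq alld show "r = s" unfolding L_def
      by (elim disjE) (simp_all, (metis)?)
  qed
  have injC: "\<forall>i j. C i = C j \<longrightarrow> i mod 8 = j mod 8"
    unfolding C_def using Ldist by simp
  have adjC: "\<forall>i. adj E (C i) (C (Suc i))"
  proof
    fix x
    obtain r where r: "r < 8" "x mod 8 = r" "Suc x mod 8 = (if r = 7 then 0 else Suc r)" using Cr by blast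
    from mod8_cases[OF r(1)] show "adj E (C x) (C (Suc x))" unfolding C_def r(2) r(3) L_def
      using a01 a12 a23 a34 a45 a56 a67 a70 by (elim disjE) simp_all
  qed
  have eC: "\<forall>x. {C x, C (Suc x)} \<in> seq_edges c"
  proof
    fix x
    obtain r where r: "r < 8" "x mod 8 = r" "Suc x mod 8 = (if r = 7 then 0 else Suc r)" using Cr by blast
    from mod8_cases[OF r(1)] show "{C x, C (Suc x)} \<in> seq_edges c" unfolding C_def r(2) r(3) L_def
      using e0 e1 e2 e3 e4 e5 e6 e7 by (elim disjE) simp_all
  qed
  have CV: "\<forall>x. C x \<in> V \<and> C x \<in> set c"
  proof
    fix x
    have r: "x mod 8 < (8::nat)" by simp
    from mod8_cases[OF r] show "C x \<in> V \<and> C x \<in> set c" unfolding C_def L_def cdef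
      using cV by (elim disjE) simp_all
  qed
  have edgeC: "\<forall>e\<in>seq_edges c. \<exists>j. e = {C j, C (Suc j)}"
  proof
    fix e assume "e \<in> seq_edges c"
    then obtain i where i: "e = {c!i, c!Suc i}" "Suc i < length c" unfolding seq_edges_def by blast
    then have "i < 8" unfolding cdef by simp
    from mod8_cases[OF this] show "\<exists>j. e = {C j, C (Suc j)}"
    proof (elim disjE)
      assume "i = 0" then show ?thesis using i by (intro exI[of _ 0]) (simp add: C_def L_def cdef)
    next
      assume "i = 1" then show ?thesis using i by (intro exI[of _ 1]) (simp add: C_def L_def cdef)
    next
      assume "i = 2" then show ?thesis using i by (intro exI[of _ 2]) (simp add: C_def L_def cdef)
    next
      assume "i = 3" then show ?thesis using i by (intro exI[of _ 3]) (simp add: C_def L_def cdef)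
    next
      assume "i = 4" then show ?thesis using i by (intro exI[of _ 4]) (simp add: C_def L_def cdef)
    next
      assume "i = 5" then show ?thesis using i by (intro exI[of _ 5]) (simp add: C_def L_def cdef)
    next
      assume "i = 6" then show ?thesis using i by (intro exI[of _ 6]) (simp add: C_def L_def cdef)
    next
      assume "i = 7" then show ?thesis using i c80 by (intro exI[of _ 7]) (simp add: C_def L_def cdef)
    qed
  qed
  have strC: "\<forall>i. opp (C (Suc i)) (C i) (C (Suc (Suc i)))"
  proof
    fix x
    have ne: "C x \<noteq> C (Suc (Suc x))"
    proof
      assume "C x = C (Suc (Suc x))"
      then have "x mod 8 = Suc (Suc x) mod 8" using injC by blast
      then show False using mi by blast
    qed
    have "path_in V E c 2 [C x, C (Suc x), C (Suc (Suc x))]"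
      unfolding path_in_def using CV adjC eC ne by (auto simp: is_path2_iff all2)
    then have "straight opp [C x, C (Suc x), C (Suc (Suc x))]" using allstr by blast
    then show "opp (C (Suc x)) (C x) (C (Suc (Suc x)))" by (simp add: straight2_iff)
  qed
  have pin2: "\<forall>i<5. {p!i, p!Suc i} \<in> seq_edges c" using pin unfolding path_in_def by auto
  have nb: "\<forall>i. 2 \<le> i \<and> i \<le> 5 \<longrightarrow> p!(i-2) \<noteq> p!i" using pp unfolding is_path_def by auto
  have "p!0 \<in> set c" using pin pp unfolding path_in_def is_path_def by auto
  then obtain j where "j < length c" "c!j = p!0" by (auto simp: in_set_conv_nth)
  then have "j < 9" "p!0 = c!j" using \<open>length c = 9\<close> by auto
  then have "\<exists>k. p!0 = C k"
  proof -
    assume j: "j < 9" "p!0 = c!j"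
    show ?thesis
    proof (cases "j = 8")
      case True then show ?thesis using j c80 by (intro exI[of _ 0]) (simp add: C_def L_def cdef)
    next
      case False then show ?thesis using j by (intro exI[of _ j]) (simp add: C_def L_def cdef nth_Cons')
    qed
  qed
  then obtain k where "p!0 = C k" by blast
  then show ?thesis using cycC[OF perC injC edgeC adjC strC pin2 nb] by blast
qed

end


context GQ begin

lemma CL:
  assumes "adj E p0 p1" "adj E p1 p2" "adj E p2 p3" "adj E p3 p4" "adj E p4 p5"
    "p0 \<noteq> p2" "p1 \<noteq> p3" "p2 \<noteq> p4" "p3 \<noteq> p5"
    "opp p1 p0 p2" "opp p2 p1 p3" "opp p3 p2 p4" "opp p4 p3 p5"
  shows "\<exists>q6 q7. adj E p5 q6 \<and> adj E q6 q7 \<and> adj E q7 p0 \<and> opp p5 p4 q6 \<and> opp q6 p5 q7 \<and>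
     opp q7 q6 p0 \<and> opp p0 q7 p1"
proof -
  have "is_path V E 5 [p0,p1,p2,p3,p4,p5]" using assms adj_V by (simp add: is_path5_iff)
  moreover have "straight opp [p0,p1,p2,p3,p4,p5]" using assms by (simp add: straight5_iff)
  ultimately show ?thesis using CL_list by fastforce
qed

lemma rootP_sym: "rootP E opp a x b y d \<Longrightarrow> rootP E opp d y b x a"
  unfolding rootP_def using adj_sym adj_V opp_sym by metis

lemma opP_sym: "opP E opp a d \<Longrightarrow> opP E opp d a"
  unfolding opP_def using rootP_sym by blast

lemma coll_sym: "coll E a b \<Longrightarrow> coll E b a"
  unfolding coll_def using adj_sym by blast

lemma rootP_P: "a \<in> P \<Longrightarrow> rootP E opp a x b y d \<Longrightarrow> x \<notin> P \<and> b \<in> P \<and> y \<notin> P \<and> d \<in> P"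
  unfolding rootP_def using bip by blast

lemma opP_P: "a \<in> P \<Longrightarrow> opP E opp a d \<Longrightarrow> d \<in> P"
  unfolding opP_def using rootP_P by blast

lemma L_R:
  assumes aP: "a \<in> P" and r: "rootP E opp a x b y d"
  shows "a \<noteq> d \<and> \<not> coll E a d"
proof -
  have ax: "adj E a x" and xb: "adj E x b" and by': "adj E b y" and yd: "adj E y d"
    and ab: "a \<noteq> b" and bd: "b \<noteq> d" and o: "opp b x y" using r unfolding rootP_def by auto
  have V: "a \<in> V" "x \<in> V" "b \<in> V" "y \<in> V" "d \<in> V" using ax xb by' yd adj_V by auto
  have xy: "x \<noteq> y" using opp_irr V o by blast
  have xP: "x \<notin> P" and bP: "b \<in> P" and yP: "y \<notin> P" using bip ax xb by' aP by blast+
  show ?thesis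
  proof (intro conjI notI)
    assume "a = d"
    then show False using T1[of a x b y] ax xb yd by' ab aP adj_sym xy by blast
  next
    assume "coll E a d"
    then obtain z where az: "adj E a z" and zd: "adj E z d" unfolding coll_def by blast
    have ad: "a \<noteq> d"
    proof
      assume "a = d"
      then show False using T1[of a x b y] ax xb yd by' ab aP adj_sym xy by blast
    qed
    have zV: "z \<in> V" and zP: "z \<notin> P" using az adj_V bip aP by auto
    obtain w where wa: "adj E w a" and owx: "opp a w x" and owz: "opp a w z"
      using plump2[of a x z] V az ax adj_sym by blast
    have wV: "w \<in> V" using wa adj_V by blast
    have wx: "w \<noteq> x" and wz: "w \<noteq> z" using opp_irr V owx owz by blast+
    have oxab: "opp x a b" using green[of x a b] V xP ax xb adj_sym ab by blast
    have oybd: "opp y b d" using green[of y b d] V yP by' yd adj_sym bd by blast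
    obtain q6 q7 where q: "adj E d q6" "adj E q6 q7" "adj E q7 w" "opp d y q6" "opp q6 d q7"
      "opp q7 q6 w" "opp w q7 a"
      using CL[of w a x b y d] wa ax xb by' yd wx ab xy bd owx oxab o oybd by blast
    have qV: "q6 \<in> V" "q7 \<in> V" using q adj_V by auto
    have ozad: "opp z a d" using green[of z a d] zV zP az zd adj_sym ad by blast
    have p1: "is_path V E 3 [w,a,z,d]" using wa az zd wz ad V wV zV by (simp add: is_path3_iff)
    have s1: "straight opp [w,a,z,d]" using owz ozad by (simp add: straight3_iff)
    have n1: "w \<noteq> q6" using opp_irr[of q7 q6 w] qV q by blast
    have n2: "q7 \<noteq> d" using opp_irr[of q6 d q7] qV q by blast
    have p2: "is_path V E 3 [w,q7,q6,d]" using q adj_sym n1 n2 V wV qV by (simp add: is_path3_iff)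
    have s2: "straight opp [w,q7,q6,d]" using q opp_sym qV by (simp add: straight3_iff)
    have "q7 = a" using VP2_3[OF p1 s1 p2 s2] by blast
    moreover have "q7 \<noteq> a" using opp_irr[of w q7 a] wV q by blast
    ultimately show False by blast
  qed
qed


lemma S0:
  assumes aP: "a \<in> P" and r: "rootP E opp a u e v d" and oxu: "opp a x u"
  shows "\<exists>t s. rootP E opp a x t s d"
proof -
  have au: "adj E a u" and ue: "adj E u e" and ev: "adj E e v" and vd: "adj E v d"
    and ae: "a \<noteq> e" and ed: "e \<noteq> d" and o: "opp e u v" using r unfolding rootP_def by auto
  have V: "a \<in> V" "u \<in> V" "e \<in> V" "v \<in> V" "d \<in> V" using au ue ev vd adj_V by auto
  have uP: "u \<notin> P" and eP: "e \<in> P" and vP: "v \<notin> P" using bip au ue ev aP by blast+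
  have xa: "adj E x a" using opp_adj V oxu by blast
  have xu: "x \<noteq> u" and uv: "u \<noteq> v" using opp_irr V oxu o by blast+
  have ouae: "opp u a e" using green[of u a e] V uP au ue adj_sym ae by blast
  have ovbd: "opp v e d" using green[of v e d] V vP ev vd adj_sym ed by blast
  obtain q6 q7 where q: "adj E d q6" "adj E q6 q7" "adj E q7 x" "opp d v q6" "opp q6 d q7"
      "opp q7 q6 x" "opp x q7 a"
    using CL[of x a u e v d] xa au ue ev vd xu ae uv ed oxu ouae o ovbd by blast
  have qV: "q6 \<in> V" "q7 \<in> V" "x \<in> V" using q adj_V by auto
  have "rootP E opp a x q7 q6 d"
    unfolding rootP_def using q adj_sym xa opp_irr qV opp_sym by metis
  then show ?thesis by blast
qed

lemma S:
  assumes aP: "a \<in> P" and od: "opP E opp a d" and ax: "adj E a x"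
  shows "\<exists>t s. rootP E opp a x t s d"
proof -
  obtain u e v where r: "rootP E opp a u e v d" using od unfolding opP_def by blast
  have au: "adj E a u" using r unfolding rootP_def by blast
  have aV: "a \<in> V" using aP PV by blast
  obtain x' where "adj E x' a" "opp a x' u" "opp a x' x" using plump2[of a u x] aV au ax adj_sym by blast
  then obtain t' s' where r': "rootP E opp a x' t' s' d" using S0[OF aP r] by blast
  have "opp a x x'" using opp_sym aV \<open>opp a x' x\<close> by blast
  then show ?thesis using S0[OF aP r'] by blast
qed

lemma Dch:
  assumes aP: "a \<in> P" and od: "opP E opp a d" and ax: "adj E a x" and xb: "adj E x b"
    and by': "adj E b y" and yd: "adj E y d" and ab: "a \<noteq> b" and bd: "b \<noteq> d"
  shows "opp b x y"
proof -
  obtain t s where r: "rootP E opp a x t s d" using S[OF aP od ax] by blast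
  have xt: "adj E x t" and ts: "adj E t s" and sd: "adj E s d" and td: "t \<noteq> d" and o: "opp t x s"
    using r unfolding rootP_def by auto
  have bP: "b \<in> P" using bip ax xb aP by blast
  have bt: "b = t"
  proof (rule ccontr)
    assume "b \<noteq> t"
    then have "rootP E opp b x t s d" unfolding rootP_def using adj_sym xb xt ts sd td o by blast
    then have "\<not> coll E b d" using L_R bP by blast
    moreover have "coll E b d" unfolding coll_def using by' yd by blast
    ultimately show False by blast
  qed
  have "y = s" using T1[of b y d s] by' yd ts sd bd bP bt by blast
  then show ?thesis using o bt by simp
qed

lemma N:
  assumes cP: "c \<in> P" and nac: "\<not> opP E opp a c" and ncol: "\<not> coll E a c" and oce: "opP E opp c e"
  shows "\<not> coll E e a"
proof
  assume "coll E e a"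
  then obtain s where es: "adj E e s" and sa: "adj E s a" unfolding coll_def by blast
  have eP: "e \<in> P" using opP_P cP oce by blast
  have oec: "opP E opp e c" using opP_sym oce by blast
  obtain t u where r: "rootP E opp e s t u c" using S[OF eP oec es] by blast
  have st: "adj E s t" and tu: "adj E t u" and uc: "adj E u c" and tc: "t \<noteq> c" and o: "opp t s u"
    using r unfolding rootP_def by auto
  show False
  proof (cases "t = a")
    case True
    then show False using ncol tu uc unfolding coll_def by blast
  next
    case False
    then have "rootP E opp a s t u c" unfolding rootP_def using adj_sym sa st tu uc tc o by blast
    then show False using nac unfolding opP_def by blast
  qed
qed

lemma G1:
  assumes aP: "a \<in> P" and ax: "adj E a x" and xb: "adj E x b" and by': "adj E b y" and yc: "adj E y c"
    and ab: "a \<noteq> b" and bc: "b \<noteq> c" and ncol: "\<not> coll E a c" and nop: "\<not> opP E opp a c"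
    and oy: "opp c y' y" and fy: "adj E f y'" and fc: "f \<noteq> c"
  shows "coll E f a \<and> f \<noteq> a"
proof -
  have bP: "b \<in> P" and cP: "c \<in> P" using bip ax xb by' yc aP by blast+
  have cV: "c \<in> V" using cP PV by blast
  have y'c: "adj E y' c" using opp_adj cV oy by blast
  have "rootP E opp b y c y' f" unfolding rootP_def
    using by' yc y'c fy adj_sym bc fc opp_sym cV oy by blast
  then have obf: "opP E opp b f" unfolding opP_def by blast
  obtain g h where r: "rootP E opp b x g h f" using S[OF bP obf] xb adj_sym by blast
  have xg: "adj E x g" and gh: "adj E g h" and hf: "adj E h f" and gf: "g \<noteq> f" and o: "opp g x h"
    using r unfolding rootP_def by auto
  have ga: "g = a"
  proof (rule ccontr)
    assume "g \<noteq> a"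
    then have "rootP E opp a x g h f" unfolding rootP_def using ax xg gh hf gf o by blast
    then have "opP E opp a f" unfolding opP_def by blast
    moreover have "\<not> opP E opp c a" using nop opP_sym by blast
    moreover have "\<not> coll E c a" using ncol coll_sym by blast
    ultimately have "\<not> coll E f c" using N[OF aP] by blast
    moreover have "coll E f c" unfolding coll_def using fy y'c by blast
    ultimately show False by blast
  qed
  have "coll E f a" unfolding coll_def using ga gh hf adj_sym by blast
  moreover have "f \<noteq> a"
  proof
    assume "f = a"
    then have "rootP E opp b y c y' a" using \<open>rootP E opp b y c y' f\<close> by simp
    then have "\<not> coll E b a" using L_R bP by blast
    moreover have "coll E b a" unfolding coll_def using xb ax adj_sym by blast
    ultimately show False by blast
  qed
  ultimately show ?thesis by blast
qed

lemma G2: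
  assumes aP: "a \<in> P" and ax: "adj E a x" and xb: "adj E x b" and by': "adj E b y" and yc: "adj E y c"
    and ab: "a \<noteq> b" and bc: "b \<noteq> c" and ncol: "\<not> coll E a c" and nop: "\<not> opP E opp a c"
    and cf: "coll E f c" and fc: "f \<noteq> c"
  shows "coll E f a \<and> f \<noteq> a"
proof -
  obtain w where fw: "adj E f w" and wc: "adj E w c" using cf unfolding coll_def by blast
  have cP: "c \<in> P" using bip ax xb by' yc aP by blast
  have cV: "c \<in> V" using cP PV by blast
  obtain y' where y'c: "adj E y' c" and o1: "opp c y' y" and o2: "opp c y' w"
    using plump2[of c y w] cV yc wc by blast
  have y'V: "y' \<in> V" using y'c adj_V by blast
  obtain f0 where f0: "adj E f0 y'" and of0: "opp y' f0 c" using plump1[of y' c] y'V y'c adj_sym by blast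
  have f0c: "f0 \<noteq> c" using opp_irr y'V of0 by blast
  have "coll E f0 a \<and> f0 \<noteq> a" using G1[OF aP ax xb by' yc ab bc ncol nop o1 f0 f0c] .
  then obtain h where f0h: "adj E f0 h" and ha: "adj E h a" and f0a: "f0 \<noteq> a" unfolding coll_def by blast
  have hy': "h \<noteq> y'"
  proof
    assume "h = y'"
    then have "coll E a c" unfolding coll_def using ha y'c adj_sym by blast
    then show False using ncol by blast
  qed
  have o3: "opp c w y'" using opp_sym cV o2 by blast
  have ah: "adj E a h" using ha adj_sym by blast
  have hf0: "adj E h f0" using f0h adj_sym by blast
  show ?thesis
    using G1[OF aP ah hf0 f0 y'c not_sym[OF f0a] f0c ncol nop o3 fw fc] .
qed

end


lemma walk_nth: "walk E xs \<Longrightarrow> Suc i < length xs \<Longrightarrow> adj E (xs!i) (xs!Suc i)"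
  unfolding walk_def by blast

lemma walk1: "walk E [a]" unfolding walk_def by simp
lemma walk3: "adj E a b \<Longrightarrow> adj E b c \<Longrightarrow> walk E [a,b,c]"
  unfolding walk_def
proof (intro conjI allI impI)
  fix i assume "adj E a b" "adj E b c" "Suc i < length [a,b,c]"
  then show "adj E ([a,b,c]!i) ([a,b,c]!Suc i)" by (cases i) (auto simp: less_Suc_eq)
qed simp
lemma walk5: "adj E a b \<Longrightarrow> adj E b c \<Longrightarrow> adj E c d \<Longrightarrow> adj E d e \<Longrightarrow> walk E [a,b,c,d,e]"
  unfolding walk_def
proof (intro conjI allI impI)
  fix i assume h: "adj E a b" "adj E b c" "adj E c d" "adj E d e" "Suc i < length [a,b,c,d,e]"
  then have "i = 0 \<or> i = 1 \<or> i = 2 \<or> i = 3" by simp arith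
  then show "adj E ([a,b,c,d,e]!i) ([a,b,c,d,e]!Suc i)" using h by (elim disjE) simp_all
qed simp

context GQ begin

lemma gd_walk:
  assumes "u \<in> V" "v \<in> V"
  shows "\<exists>xs. walk E xs \<and> length xs = Suc (gdist E u v) \<and> hd xs = u \<and> last xs = v"
proof -
  have cg: "connected_graph V E" using ngon unfolding veldkamp_ngon_def by blast
  obtain xs where xs: "walk E xs" "hd xs = u" "last xs = v" using cg assms unfolding connected_graph_def by blast
  then have "xs \<noteq> []" unfolding walk_def by blast
  then have "length xs = Suc (length xs - 1)" by simp
  then have ex: "\<exists>k xs. walk E xs \<and> length xs = Suc k \<and> hd xs = u \<and> last xs = v" using xs by blast
  show ?thesis unfolding gdist_def by (rule LeastI_ex[OF ex])
qed

lemma gd_le: "walk E xs \<Longrightarrow> length xs = Suc k \<Longrightarrow> hd xs = u \<Longrightarrow> last xs = v \<Longrightarrow> gdist E u v \<le> k"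
  unfolding gdist_def by (rule Least_le) blast

lemma gd_cases:
  assumes "u \<in> V" "v \<in> V"
  shows "(gdist E u v = 0 \<longrightarrow> u = v) \<and> (gdist E u v = 1 \<longrightarrow> adj E u v) \<and>
    (gdist E u v = 2 \<longrightarrow> coll E u v) \<and> (gdist E u v = 3 \<longrightarrow> (\<exists>z w. adj E u z \<and> adj E z w \<and> adj E w v))"
proof -
  obtain xs where xs: "walk E xs" "length xs = Suc (gdist E u v)" "hd xs = u" "last xs = v"
    using gd_walk[OF assms] by blast
  show ?thesis
  proof (intro conjI impI)
    assume "gdist E u v = 0"
    then obtain a where "xs = [a]" using xs by (auto simp: length_Suc_conv)
    then show "u = v" using xs by simp
  next
    assume "gdist E u v = 1"
    then obtain a b where ab: "xs = [a,b]" using xs by (auto simp: length_Suc_conv)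
    then show "adj E u v" using xs walk_nth[of E xs 0] by simp
  next
    assume "gdist E u v = 2"
    then obtain a b c where ab: "xs = [a,b,c]" using xs by (auto simp: length_Suc_conv numeral_eq_Suc)
    then show "coll E u v" unfolding coll_def using xs walk_nth[of E xs 0] walk_nth[of E xs 1] by auto
  next
    assume "gdist E u v = 3"
    then obtain a b c d where ab: "xs = [a,b,c,d]" using xs by (auto simp: length_Suc_conv numeral_eq_Suc)
    then show "\<exists>z w. adj E u z \<and> adj E z w \<and> adj E w v"
      using xs walk_nth[of E xs 0] walk_nth[of E xs 1] walk_nth[of E xs 2] by auto
  qed
qed

lemma Gamma2: "a \<in> P \<Longrightarrow> u \<in> Gamma_m V E 2 a \<longleftrightarrow> u \<in> V \<and> u \<noteq> a \<and> coll E u a"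
proof -
  assume aP: "a \<in> P"
  have aV: "a \<in> V" using aP PV by blast
  show ?thesis
  proof
    assume "u \<in> Gamma_m V E 2 a"
    then have uV: "u \<in> V" and g: "gdist E u a = 2" unfolding Gamma_m_def by auto
    have "coll E u a" using gd_cases[OF uV aV] g by simp
    moreover have "u \<noteq> a"
    proof
      assume "u = a"
      then have "gdist E u a \<le> 0" using gd_le[of "[a]" 0 u a] walk1[of E] by simp
      then show False using g by simp
    qed
    ultimately show "u \<in> V \<and> u \<noteq> a \<and> coll E u a" using uV by blast
  next
    assume h: "u \<in> V \<and> u \<noteq> a \<and> coll E u a"
    then obtain z where uz: "adj E u z" and za: "adj E z a" unfolding coll_def by blast
    have le: "gdist E u a \<le> 2" using gd_le[of "[u,z,a]" 2 u a] walk3[OF uz za] by simp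
    have uP: "u \<in> P" using bip uz za aP by blast
    have n0: "gdist E u a \<noteq> 0" using gd_cases[of u a] h aV by blast
    have n1: "gdist E u a \<noteq> 1"
    proof
      assume "gdist E u a = 1"
      then have "adj E u a" using gd_cases[of u a] h aV by blast
      then show False using bip uP aP by blast
    qed
    have "gdist E u a = 2" using le n0 n1 by arith
    then show "u \<in> Gamma_m V E 2 a" unfolding Gamma_m_def using h by blast
  qed
qed

lemma gd4:
  assumes aP: "a \<in> P" and cP: "c \<in> P" and ac: "a \<noteq> c" and ncol: "\<not> coll E a c"
    and ax: "adj E a x" and xb: "adj E x b" and by': "adj E b y" and yc: "adj E y c"
  shows "gdist E a c = 4"
proof -
  have aV: "a \<in> V" and cV: "c \<in> V" using aP cP PV by auto
  have le: "gdist E a c \<le> 4" using gd_le[of "[a,x,b,y,c]" 4 a c] walk5[OF ax xb by' yc] by simp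
  note gc = gd_cases[OF aV cV]
  have n0: "gdist E a c \<noteq> 0" using gc ac by blast
  have n1: "gdist E a c \<noteq> 1" using gc bip aP cP by blast
  have n2: "gdist E a c \<noteq> 2" using gc ncol by blast
  have n3: "gdist E a c \<noteq> 3"
  proof
    assume "gdist E a c = 3"
    then obtain z w where "adj E a z" "adj E z w" "adj E w c" using gc by blast
    then show False using bip aP cP by blast
  qed
  show ?thesis using le n0 n1 n2 n3 by arith
qed

lemma gd4_inv:
  assumes aV: "a \<in> V" and cV: "c \<in> V" and g: "gdist E a c = 4"
  shows "a \<noteq> c \<and> \<not> coll E a c"
proof (intro conjI notI)
  assume "a = c"
  then have "gdist E a c \<le> 0" using gd_le[of "[a]" 0 a c] walk1[of E] by simp
  then show False using g by simp
next
  assume "coll E a c"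
  then obtain z where "adj E a z" "adj E z c" unfolding coll_def by blast
  then have "gdist E a c \<le> 2" using gd_le[of "[a,z,c]" 2 a c] walk3[of E a z c] by simp
  then show False using g by simp
qed

end


context GQ begin

lemma op_char:
  assumes aP: "a \<in> P"
  shows "d \<in> op_set V E opp 4 a \<longleftrightarrow> opP E opp a d"
proof
  assume "d \<in> op_set V E opp 4 a"
  then obtain p where p: "is_path V E 4 p" "straight opp p" "hd p = a" "last p = d"
    unfolding op_set_def by blast
  then have "length p = 5" unfolding is_path_def by simp
  then obtain p0 p1 p2 p3 p4 where pd: "p = [p0,p1,p2,p3,p4]" by (auto simp: length_Suc_conv numeral_eq_Suc)
  have "rootP E opp a p1 p2 p3 d" unfolding rootP_def using p unfolding pd
    by (simp add: is_path4_iff straight4_iff)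
  then show "opP E opp a d" unfolding opP_def by blast
next
  assume "opP E opp a d"
  then obtain x b y where r: "rootP E opp a x b y d" unfolding opP_def by blast
  have ax: "adj E a x" and xb: "adj E x b" and by': "adj E b y" and yd: "adj E y d"
    and ab: "a \<noteq> b" and bd: "b \<noteq> d" and o: "opp b x y" using r unfolding rootP_def by auto
  have V: "a \<in> V" "x \<in> V" "b \<in> V" "y \<in> V" "d \<in> V" using ax xb by' yd adj_V by auto
  have xP: "x \<notin> P" and yP: "y \<notin> P" using rootP_P[OF aP r] by auto
  have xy: "x \<noteq> y" using opp_irr V o by blast
  have o1: "opp x a b" using green[of x a b] V xP ax xb adj_sym ab by blast
  have o2: "opp y b d" using green[of y b d] V yP by' yd adj_sym bd by blast
  have "is_path V E 4 [a,x,b,y,d]" using V ax xb by' yd ab xy bd by (simp add: is_path4_iff)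
  moreover have "straight opp [a,x,b,y,d]" using o1 o o2 by (simp add: straight4_iff)
  ultimately show "d \<in> op_set V E opp 4 a" unfolding op_set_def by force
qed

lemma A3:
  assumes aP: "a \<in> P" and ax: "adj E a x" and xb: "adj E x b" and by': "adj E b y" and yc: "adj E y c"
    and ab: "a \<noteq> b" and bc: "b \<noteq> c" and ncol: "\<not> coll E a c" and nop: "\<not> opP E opp a c"
    and od: "opP E opp a d"
  shows "opP E opp c d"
proof (rule ccontr)
  assume ncd: "\<not> opP E opp c d"
  have cP: "c \<in> P" using bip ax xb by' yc aP by blast
  have ncol': "\<not> coll E c a" using ncol coll_sym by blast
  have nop': "\<not> opP E opp c a" using nop opP_sym by blast
  have G2r: "\<And>f. coll E f a \<Longrightarrow> f \<noteq> a \<Longrightarrow> coll E f c \<and> f \<noteq> c"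
    using G2[OF cP _ _ _ _ bc[symmetric] ab[symmetric] ncol' nop'] yc by' xb ax adj_sym by blast
  obtain u e v where r: "rootP E opp a u e v d" using od unfolding opP_def by blast
  have au: "adj E a u" and ue: "adj E u e" and ev: "adj E e v" and vd: "adj E v d"
    and ae: "a \<noteq> e" and ed: "e \<noteq> d" and o: "opp e u v" using r unfolding rootP_def by auto
  have eP: "e \<in> P" and dP: "d \<in> P" using rootP_P[OF aP r] by auto
  have "coll E e a" unfolding coll_def using au ue adj_sym by blast
  then have "coll E e c \<and> e \<noteq> c" using G2r ae by blast
  then obtain m where em: "adj E e m" and mc: "adj E m c" and ec: "e \<noteq> c" unfolding coll_def by blast
  have ndc: "\<not> coll E d c" using N[OF aP nop' ncol' od] .
  have ndc': "\<not> coll E d c" using ndc .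
  have mv: "m \<noteq> v"
  proof
    assume "m = v"
    then have "coll E d c" unfolding coll_def using vd mc adj_sym by blast
    then show False using ndc by blast
  qed
  have nop2: "\<not> opP E opp d c" using ncd opP_sym by blast
  have G2d: "\<And>f. coll E f c \<Longrightarrow> f \<noteq> c \<Longrightarrow> coll E f d \<and> f \<noteq> d"
    using G2[OF dP _ _ _ _ ed[symmetric] ec ndc nop2] vd ev em mc adj_sym by blast
  have uV: "u \<in> V" using au adj_V by blast
  obtain o' where ou: "adj E o' u" and o1: "opp u o' a" and o2: "opp u o' e"
    using plump2[of u a e] uV au ue adj_sym by blast
  have oa: "o' \<noteq> a" and oe: "o' \<noteq> e" using opp_irr uV o1 o2 by blast+
  have oP: "o' \<in> P" using bip ou au aP by blast
  have "coll E o' a" unfolding coll_def using ou au adj_sym by blast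
  then have "coll E o' c \<and> o' \<noteq> c" using G2r oa by blast
  then have "coll E o' d" using G2d by blast
  moreover have "rootP E opp o' u e v d" unfolding rootP_def using ou ue ev vd oe ed o by blast
  ultimately show False using L_R oP by blast
qed


lemma B1:
  assumes aP: "a \<in> P" and cP: "c \<in> P" and ac: "a \<noteq> c" and eq: "\<forall>d. opP E opp a d \<longleftrightarrow> opP E opp c d"
  shows "\<not> coll E a c"
proof
  assume "coll E a c"
  then obtain z where az: "adj E a z" and zc: "adj E z c" unfolding coll_def by blast
  have aV: "a \<in> V" using aP PV by blast
  have zV: "z \<in> V" and zP: "z \<notin> P" using az adj_V bip aP by auto
  obtain w where wa: "adj E w a" and owz: "opp a w z" using plump1[of a z] aV az adj_sym by blast
  have wV: "w \<in> V" and wP: "w \<notin> P" using wa adj_V bip aP by auto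
  obtain e where ew: "adj E e w" and oea: "opp w e a" using plump1[of w a] wV wa adj_sym by blast
  have eV: "e \<in> V" and eP: "e \<in> P" using ew adj_V bip wP by auto
  have ea: "e \<noteq> a" using opp_irr wV oea by blast
  obtain v where ve: "adj E v e" and ovw: "opp e v w" using plump1[of e w] eV ew adj_sym by blast
  have vV: "v \<in> V" using ve adj_V by blast
  have zw: "z \<noteq> w" and wv: "w \<noteq> v" using opp_irr aV eV owz ovw by blast+
  have o1: "opp z c a" using green[of z c a] zV zP zc az adj_sym ac by blast
  have o2: "opp a z w" using opp_sym aV owz by blast
  have o3: "opp w a e" using opp_sym wV oea by blast
  have o4: "opp e w v" using opp_sym eV ovw by blast
  obtain q6 q7 where q: "adj E v q6" "adj E q6 q7" "adj E q7 c" "opp v e q6" "opp q6 v q7"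
      "opp q7 q6 c" "opp c q7 z"
    using CL[of c z a w e v] zc az wa ew ve adj_sym ac zw ea wv o1 o2 o3 o4 by blast
  have eq6: "e \<noteq> q6" using opp_irr vV q by blast
  have "rootP E opp a w e v q6" unfolding rootP_def using wa ew ve q(1) adj_sym ea eq6 o4 by blast
  then have "opP E opp a q6" unfolding opP_def by blast
  then have "opP E opp c q6" using eq by blast
  then obtain x b y where r: "rootP E opp c x b y q6" unfolding opP_def by blast
  have "\<not> coll E c q6" using L_R[OF cP r] by blast
  moreover have "coll E c q6" unfolding coll_def using q adj_sym by blast
  ultimately show False by blast
qed

lemma B2:
  assumes aP: "a \<in> P" and cP: "c \<in> P" and ac: "a \<noteq> c" and eq: "\<forall>d. opP E opp a d \<longleftrightarrow> opP E opp c d"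
  shows "\<exists>x b s. adj E a x \<and> adj E x b \<and> adj E b s \<and> adj E s c \<and> a \<noteq> b \<and> b \<noteq> c \<and> x \<noteq> s \<and> \<not> opp b x s"
proof -
  have ncol: "\<not> coll E a c" using B1[OF aP cP ac eq] .
  have aV: "a \<in> V" using aP PV by blast
  obtain x where xa: "adj E x a" using plump0 aV by blast
  have xV: "x \<in> V" using xa adj_V by blast
  obtain b where bx: "adj E b x" and obxa: "opp x b a" using plump1[of x a] xV xa adj_sym by blast
  have bV: "b \<in> V" using bx adj_V by blast
  have ab: "a \<noteq> b" using opp_irr xV obxa by blast
  obtain y where yb: "adj E y b" and oyx: "opp b y x" using plump1[of b x] bV bx adj_sym by blast
  have yV: "y \<in> V" using yb adj_V by blast
  obtain d where dy: "adj E d y" and ody: "opp y d b" using plump1[of y b] yV yb adj_sym by blast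
  have bd: "b \<noteq> d" using opp_irr yV ody by blast
  have r: "rootP E opp a x b y d" unfolding rootP_def using xa bx yb dy adj_sym ab bd oyx opp_sym bV by metis
  then have "opP E opp a d" unfolding opP_def by blast
  then have "opP E opp c d" using eq by blast
  then have odc: "opP E opp d c" using opP_sym by blast
  have dP: "d \<in> P" using rootP_P[OF aP r] by blast
  obtain t s where r2: "rootP E opp d y t s c" using S[OF dP odc] dy adj_sym by blast
  have yt: "adj E y t" and ts: "adj E t s" and sc: "adj E s c" and tc: "t \<noteq> c" using r2 unfolding rootP_def by auto
  have tb: "t = b"
  proof (rule ccontr)
    assume "t \<noteq> b"
    then have "rootP E opp a x b y t" using r yt unfolding rootP_def by blast
    then have "opP E opp a t" unfolding opP_def by blast
    then have "opP E opp c t" using eq by blast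
    then obtain x' b' y' where r3: "rootP E opp c x' b' y' t" unfolding opP_def by blast
    have "\<not> coll E c t" using L_R[OF cP r3] by blast
    moreover have "coll E c t" unfolding coll_def using ts sc adj_sym by blast
    ultimately show False by blast
  qed
  have xs: "x \<noteq> s"
  proof
    assume "x = s"
    then have "coll E a c" unfolding coll_def using xa sc adj_sym by blast
    then show False using ncol by blast
  qed
  have nst: "\<not> opp b x s"
  proof
    assume "opp b x s"
    then have "rootP E opp a x b s c" unfolding rootP_def using xa bx ts sc tb ab tc adj_sym by blast
    then have "opP E opp a c" unfolding opP_def by blast
    then have "opP E opp c c" using eq by blast
    then obtain x' b' y' where r3: "rootP E opp c x' b' y' c" unfolding opP_def by blast
    then show False using L_R[OF cP r3] by blast
  qed
  show ?thesis using xa bx ts sc tb ab tc xs nst adj_sym by blast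
qed

lemma weed_unpack:
  assumes w: "weed V E opp P w" "hd w = a" "last w = c"
  shows "\<exists>x b y. adj E a x \<and> adj E x b \<and> adj E b y \<and> adj E y c \<and> a \<noteq> b \<and> b \<noteq> c \<and> \<not> opp b x y
    \<and> a \<in> P \<and> c \<in> P \<and> gdist E a c = 4"
proof -
  have p: "is_path V E 4 w" "\<not> straight opp w" "w!0 \<in> P" "w!2 \<in> P" "w!4 \<in> P" "gdist E (w!0) (w!4) = 4"
    using w unfolding weed_def by auto
  then have "length w = 5" unfolding is_path_def by simp
  then obtain p0 p1 p2 p3 p4 where pd: "w = [p0,p1,p2,p3,p4]" by (auto simp: length_Suc_conv numeral_eq_Suc)
  have a0: "p0 = a" and c4: "p4 = c" using w pd by auto
  have h: "{p0,p1,p2,p3,p4} \<subseteq> V" "adj E p0 p1" "adj E p1 p2" "adj E p2 p3" "adj E p3 p4" "p0 \<noteq> p2" "p1 \<noteq> p3" "p2 \<noteq> p4"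
    using p(1) unfolding pd is_path4_iff by auto
  have ns: "\<not> (opp p1 p0 p2 \<and> opp p2 p1 p3 \<and> opp p3 p2 p4)" using p(2) unfolding pd straight4_iff .
  have P: "p0 \<in> P" "p2 \<in> P" "p4 \<in> P" using p unfolding pd by auto
  have lP: "p1 \<notin> P" "p3 \<notin> P" using bip h P by blast+
  have o1: "opp p1 p0 p2" using green[of p1 p0 p2] h lP adj_sym by blast
  have o3: "opp p3 p2 p4" using green[of p3 p2 p4] h lP adj_sym by blast
  have "\<not> opp p2 p1 p3" using ns o1 o3 by blast
  moreover have "gdist E p0 p4 = 4" using p unfolding pd by simp
  ultimately show ?thesis using h P a0 c4 by blast
qed

lemma weed_facts:
  assumes w: "weed V E opp P w" "hd w = a" "last w = c"
  shows "\<exists>x b y. adj E a x \<and> adj E x b \<and> adj E b y \<and> adj E y c \<and> a \<noteq> b \<and> b \<noteq> c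
    \<and> a \<in> P \<and> c \<in> P \<and> a \<noteq> c \<and> \<not> coll E a c \<and> \<not> opP E opp a c"
proof -
  obtain x b y where h: "adj E a x" "adj E x b" "adj E b y" "adj E y c" "a \<noteq> b" "b \<noteq> c" "\<not> opp b x y"
     "a \<in> P" "c \<in> P" "gdist E a c = 4" using weed_unpack[OF w] by blast
  have "a \<noteq> c \<and> \<not> coll E a c" using gd4_inv h PV by blast
  moreover have "\<not> opP E opp a c" using Dch h by blast
  ultimately show ?thesis using h by blast
qed

lemma simeq_iff:
  assumes aP: "a \<in> P" and cP: "c \<in> P"
  shows "simeq V E opp P a c \<longleftrightarrow> (\<forall>d. opP E opp a d \<longleftrightarrow> opP E opp c d)"
proof
  assume "simeq V E opp P a c"
  then consider "a = c" | w where "weed V E opp P w" "hd w = a" "last w = c" unfolding simeq_def by blast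
  then show "\<forall>d. opP E opp a d \<longleftrightarrow> opP E opp c d"
  proof cases
    case 1 then show ?thesis by simp
  next
    case 2
    then obtain x b y where h: "adj E a x" "adj E x b" "adj E b y" "adj E y c" "a \<noteq> b" "b \<noteq> c"
      "\<not> coll E a c" "\<not> opP E opp a c" using weed_facts by blast
    have h2: "\<not> coll E c a" "\<not> opP E opp c a" using h coll_sym opP_sym by blast+
    show ?thesis
    proof (intro allI iffI)
      fix d assume "opP E opp a d" then show "opP E opp c d" using A3[OF aP h(1-8)] by blast
    next
      fix d assume "opP E opp c d" then show "opP E opp a d"
        using A3[OF cP _ _ _ _ h(6)[symmetric] h(5)[symmetric] h2] h adj_sym by blast
    qed
  qed
next
  assume eq: "\<forall>d. opP E opp a d \<longleftrightarrow> opP E opp c d"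
  show "simeq V E opp P a c"
  proof (cases "a = c")
    case True then show ?thesis unfolding simeq_def by simp
  next
    case False
    obtain x b s where h: "adj E a x" "adj E x b" "adj E b s" "adj E s c" "a \<noteq> b" "b \<noteq> c" "x \<noteq> s" "\<not> opp b x s"
      using B2[OF aP cP False eq] by blast
    have ncol: "\<not> coll E a c" using B1[OF aP cP False eq] .
    have V: "a \<in> V" "x \<in> V" "b \<in> V" "s \<in> V" "c \<in> V" using h adj_V by auto
    have bP: "b \<in> P" using bip h aP by blast
    have "weed V E opp P [a,x,b,s,c]" unfolding weed_def
      using h V aP bP cP gd4[OF aP cP False ncol h(1-4)] by (simp add: is_path4_iff straight4_iff)
    then show ?thesis unfolding simeq_def by force
  qed
qed

lemma simeq_gamma:
  assumes aP: "a \<in> P" and cP: "c \<in> P" and s: "simeq V E opp P a c"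
  shows "Gamma_m V E 2 a = Gamma_m V E 2 c"
proof (cases "a = c")
  case True then show ?thesis by simp
next
  case False
  then obtain w where "weed V E opp P w" "hd w = a" "last w = c" using s unfolding simeq_def by blast
  then obtain x b y where h: "adj E a x" "adj E x b" "adj E b y" "adj E y c" "a \<noteq> b" "b \<noteq> c"
      "\<not> coll E a c" "\<not> opP E opp a c" using weed_facts by blast
  have h2: "\<not> coll E c a" "\<not> opP E opp c a" using h coll_sym opP_sym by blast+
  have g1: "\<And>f. coll E f c \<Longrightarrow> f \<noteq> c \<Longrightarrow> coll E f a \<and> f \<noteq> a" using G2[OF aP h(1-8)] by blast
  have g2: "\<And>f. coll E f a \<Longrightarrow> f \<noteq> a \<Longrightarrow> coll E f c \<and> f \<noteq> c"
    using G2[OF cP _ _ _ _ h(6)[symmetric] h(5)[symmetric] h2] h adj_sym by blast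
  show ?thesis using Gamma2[OF aP] Gamma2[OF cP] g1 g2 by blast
qed

end

theorem proposition4p6:
  fixes V :: "'v set" and E :: "'v set set" and opp :: "'v \<Rightarrow> 'v \<Rightarrow> 'v \<Rightarrow> bool"
    and P :: "'v set" and a b :: 'v
  assumes "green_quadrangle V E opp P"
    and "a \<in> P" and "b \<in> P"
  shows "(simeq V E opp P a b \<longleftrightarrow> op_set V E opp 4 a = op_set V E opp 4 b)
    \<and> (simeq V E opp P a b \<longrightarrow> Gamma_m V E 2 a = Gamma_m V E 2 b)
    \<and> equiv P {(x, y). x \<in> P \<and> y \<in> P \<and> simeq V E opp P x y}"
proof -
  interpret GQ V E opp P by (rule GQ.intro) (rule assms(1))
  have key: "\<And>x y. x \<in> P \<Longrightarrow> y \<in> P \<Longrightarrow> simeq V E opp P x y \<longleftrightarrow> op_set V E opp 4 x = op_set V E opp 4 y"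
  proof -
    fix x y assume xP: "x \<in> P" and yP: "y \<in> P"
    have "op_set V E opp 4 x = op_set V E opp 4 y \<longleftrightarrow> (\<forall>d. opP E opp x d \<longleftrightarrow> opP E opp y d)"
      using op_char[OF xP] op_char[OF yP] by blast
    then show "simeq V E opp P x y \<longleftrightarrow> op_set V E opp 4 x = op_set V E opp 4 y"
      using simeq_iff[OF xP yP] by simp
  qed
  have p1: "simeq V E opp P a b \<longleftrightarrow> op_set V E opp 4 a = op_set V E opp 4 b" using key assms by blast
  have p2: "simeq V E opp P a b \<longrightarrow> Gamma_m V E 2 a = Gamma_m V E 2 b" using simeq_gamma assms by blast
  have p3: "equiv P {(x, y). x \<in> P \<and> y \<in> P \<and> simeq V E opp P x y}"
    unfolding equiv_def refl_on_def sym_def trans_def using key by auto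
  show ?thesis using p1 p2 p3 by blast
qed

end
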